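(* ${\rm ML}^{\rm W}(K_3)=3$, and ${\rm ML}^{\rm W}(K_n)=\frac{n^2-5n+10}{2}$ for every $n \geq 4$.
   Context: $K_n$ is the complete graph on $n$ vertices. A walk of a graph $G$ is a sequence of vertices $u_0u_1\dots u_p$ with $u_tu_{t+1}\in E(G)$ for all $t$ (vertices and edges may repeat); its length is $p$. For a walk $W$ of $G$, $G+W$ is the multigraph on $V(G)$ whose edge multiset consists of $E(G)$ together with each edge added as many times as $W$ traverses it. A multigraph is locally irregular if no two adjacent vertices have the same degree; a walk is irregularising if $G+W$ is locally irregular. ${\rm ML}^{\rm W}(G)$ denotes the minimum length of an irregularising walk of $G$ (a walk of length $0$ is allowed). *)

theory Defs
  imports Main
begin

text \<open>A simple graph is given by a vertex set V and a symmetric irreflexive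
 adjacency relation E.\<close>

definition is_walk :: "'a set \<Rightarrow> ('a \<Rightarrow> 'a \<Rightarrow> bool) \<Rightarrow> 'a list \<Rightarrow> bool" where
  "is_walk V E ws \<longleftrightarrow> ws \<noteq> [] \<and> set ws \<subseteq> V \<and>
     (\<forall>t. Suc t < length ws \<longrightarrow> E (ws ! t) (ws ! Suc t))"

definition walk_length :: "'a list \<Rightarrow> nat" where
  "walk_length ws = length ws - 1"

definition graph_deg :: "'a set \<Rightarrow> ('a \<Rightarrow> 'a \<Rightarrow> bool) \<Rightarrow> 'a \<Rightarrow> nat" where
  "graph_deg V E v = card {u \<in> V. E v u}"

text \<open>Degree of v in the multigraph G + W: degree in G plus the number of
 traversals by W of edges incident to v (the graph has no loops).\<close>
definition plus_walk_deg :: "'a set \<Rightarrow> ('a \<Rightarrow> 'a \<Rightarrow> bool) \<Rightarrow> 'a list \<Rightarrow> 'a \<Rightarrow> nat" where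
  "plus_walk_deg V E ws v = graph_deg V E v +
     card {t. t < walk_length ws \<and> (ws ! t = v \<or> ws ! Suc t = v)}"

text \<open>G + W is locally irregular: adjacent vertices (adjacency in G + W is
 adjacency in G, since W only uses edges of G) have distinct degrees.\<close>
definition irregularising :: "'a set \<Rightarrow> ('a \<Rightarrow> 'a \<Rightarrow> bool) \<Rightarrow> 'a list \<Rightarrow> bool" where
  "irregularising V E ws \<longleftrightarrow>
     (\<forall>u\<in>V. \<forall>v\<in>V. E u v \<longrightarrow> plus_walk_deg V E ws u \<noteq> plus_walk_deg V E ws v)"

definition min_irreg_walk_len :: "'a set \<Rightarrow> ('a \<Rightarrow> 'a \<Rightarrow> bool) \<Rightarrow> nat" where
  "min_irreg_walk_len V E = (LEAST p. \<exists>ws. is_walk V E ws \<and> irregularising V E ws \<and> walk_length ws = p)"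

definition K_V :: "nat \<Rightarrow> nat set" where "K_V n = {0..<n}"
definition K_E :: "nat \<Rightarrow> nat \<Rightarrow> bool" where "K_E u v \<longleftrightarrow> u \<noteq> v"

end

theory Submission
  imports Defs
begin

fun wd :: "'a list \<Rightarrow> 'a \<Rightarrow> nat" where
  "wd (x#y#ys) v = (if x = v \<or> y = v then 1 else 0) + wd (y#ys) v"
| "wd _ v = 0"

lemma set_split0: "{t::nat. P t} = (if P 0 then {0} else {}) \<union> Suc ` {t. P (Suc t)}"
proof (rule set_eqI)
  fix t show "t \<in> {t. P t} \<longleftrightarrow> t \<in> (if P 0 then {0} else {}) \<union> Suc ` {t. P (Suc t)}"
    by (cases t) auto
qed

lemma card_eq_wd:
  "card {t. t < length ws - 1 \<and> (ws!t = v \<or> ws!Suc t = v)} = wd ws v"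
proof (induction ws v rule: wd.induct)
  case (1 x y ys v)
  have "card {t. t < length (x#y#ys) - 1 \<and> ((x#y#ys)!t = v \<or> (x#y#ys)!Suc t = v)}
      = card ((if x = v \<or> y = v then {0} else {}) \<union> Suc ` {t. t < length (y#ys) - 1 \<and> ((y#ys)!t = v \<or> (y#ys)!Suc t = v)})"
    by (subst set_split0) simp
  also have "\<dots> = (if x = v \<or> y = v then 1 else 0) + card {t. t < length (y#ys) - 1 \<and> ((y#ys)!t = v \<or> (y#ys)!Suc t = v)}"
    by (subst card_Un_disjoint) (auto simp: card_image)
  finally show ?case using 1 by simp
qed auto


lemma wd_parity:
  "successively (\<noteq>) ws \<Longrightarrow> ws \<noteq> [] \<Longrightarrow>
   wd ws v + (if hd ws = v then 1 else 0) + (if last ws = v then 1 else 0) = 2 * count_list ws v"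
proof (induction ws v rule: wd.induct)
  case (1 x y ys v)
  then have "x \<noteq> y" "successively (\<noteq>) (y#ys)" by auto
  with 1 show ?case by (cases "x = v"; cases "y = v") auto
qed auto
lemma wd_sum:
  assumes "finite V"
  shows "successively (\<noteq>) ws \<Longrightarrow> set ws \<subseteq> V \<Longrightarrow> sum (wd ws) V = 2 * (length ws - 1)"
proof (induction ws rule: induct_list012)
  case (3 x y ys)
  have ne: "x \<noteq> y" "successively (\<noteq>) (y#ys)" using 3 by auto
  have "sum (wd (x#y#ys)) V = sum (\<lambda>v. if x = v \<or> y = v then 1 else 0) V + sum (wd (y#ys)) V"
    by (simp add: sum.distrib)
  also have "sum (\<lambda>v. if x = v \<or> y = v then 1 else 0) V = card {v\<in>V. x = v \<or> y = v}"
    using assms by (simp add: sum.If_cases Int_def conj_commute)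
  also have "{v\<in>V. x = v \<or> y = v} = {x, y}" using 3 by auto
  finally show ?case using 3 ne by simp
qed auto


lemma sum_distinct_lb:
  fixes S :: "nat set"
  shows "finite S \<Longrightarrow> card S * (card S - 1) \<le> 2 * \<Sum>S"
proof (induction "card S" arbitrary: S)
  case 0 then show ?case by simp
next
  case (Suc m)
  define M where "M = Max S"
  have fin: "finite S" by fact
  have ne: "S \<noteq> {}" using Suc(2) by auto
  have MS: "M \<in> S" unfolding M_def using fin ne by (rule Max_in)
  have "S \<subseteq> {0..M}" unfolding M_def using fin by (simp add: subset_eq)
  hence "card S \<le> card {0..M}" by (intro card_mono) simp_all
  hence Mm: "m \<le> M" using Suc(2) by simp
  have c: "card (S - {M}) = m" using Suc(2) MS fin by simp
  have IH: "m * (m - 1) \<le> 2 * \<Sum>(S - {M})" using Suc(1)[of "S - {M}"] c fin by simp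
  have "\<Sum>S = M + \<Sum>(S - {M})" using fin MS by (simp add: sum.remove)
  moreover have "Suc m * m = 2 * m + m * (m - 1)" by (cases m) auto
  ultimately show ?case using IH Mm Suc(2)[symmetric] by simp
qed

lemma even_sum_lb:
  fixes E :: "nat set"
  assumes "finite E" "\<forall>x\<in>E. even x"
  shows "card E * (card E - 1) \<le> \<Sum>E"
proof -
  have inj: "inj_on (\<lambda>x. x div 2) E"
    using assms(2) by (intro inj_onI) (metis dvd_mult_div_cancel)
  have c: "card ((\<lambda>x. x div 2) ` E) = card E" using inj by (simp add: card_image)
  have "\<Sum>E = (\<Sum>x\<in>E. 2 * (x div 2))" using assms(2) by (intro sum.cong) auto
  also have "\<dots> = 2 * \<Sum>((\<lambda>x. x div 2) ` E)" using inj by (simp add: sum.reindex sum_distrib_left)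
  finally have "\<Sum>E = 2 * \<Sum>((\<lambda>x. x div 2) ` E)" .
  with sum_distinct_lb[of "(\<lambda>x. x div 2) ` E"] c assms(1) show ?thesis by simp
qed

lemma odd_sum_lb:
  fixes Od :: "nat set"
  assumes "finite Od" "\<forall>x\<in>Od. odd x"
  shows "card Od * card Od \<le> \<Sum>Od"
proof -
  have inj: "inj_on (\<lambda>x. x div 2) Od"
    using assms(2) by (intro inj_onI) (metis odd_two_times_div_two_succ)
  have c: "card ((\<lambda>x. x div 2) ` Od) = card Od" using inj by (simp add: card_image)
  have "\<Sum>Od = (\<Sum>x\<in>Od. 2 * (x div 2) + 1)" using assms(2) by (intro sum.cong) auto
  also have "\<dots> = 2 * \<Sum>((\<lambda>x. x div 2) ` Od) + card Od"
    using inj by (simp add: sum.reindex sum_distrib_left sum_Suc)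
  finally have "\<Sum>Od = 2 * \<Sum>((\<lambda>x. x div 2) ` Od) + card Od" .
  moreover have "card Od * (card Od - 1) + card Od = card Od * card Od"
    by (cases "card Od") auto
  ultimately show ?thesis using sum_distinct_lb[of "(\<lambda>x. x div 2) ` Od"] c assms(1) by simp
qed

lemma arith_lb:
  fixes e k n p :: nat
  assumes "e * (e - 1) + k * k \<le> p" "e + k = n" "k \<le> 2" "n \<ge> 4"
  shows "n^2 + 10 \<le> p + 5 * n"
proof -
  obtain q where q: "n = q + 4" using assms(4) by (metis add.commute le_Suc_ex)
  have "k = 0 \<or> k = 1 \<or> k = 2" using assms(3) by auto
  then show ?thesis
  proof (elim disjE)
    assume "k = 0" then have "e = q + 4" using assms q by simp
    then show ?thesis using assms(1) \<open>k = 0\<close> q by (simp add: power2_eq_square algebra_simps)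
  next
    assume "k = 1" then have "e = q + 3" using assms q by simp
    then show ?thesis using assms(1) \<open>k = 1\<close> q by (simp add: power2_eq_square algebra_simps)
  next
    assume "k = 2" then have "e = q + 2" using assms q by simp
    then show ?thesis using assms(1) \<open>k = 2\<close> q by (simp add: power2_eq_square algebra_simps)
  qed
qed

lemma walk_K: "is_walk (K_V n) K_E ws \<longleftrightarrow> ws \<noteq> [] \<and> set ws \<subseteq> {0..<n} \<and> successively (\<noteq>) ws"
  by (auto simp: is_walk_def K_V_def K_E_def successively_conv_nth)

lemma pwd_K: "v < n \<Longrightarrow> plus_walk_deg (K_V n) K_E ws v = (n - 1) + wd ws v"
proof -
  assume v: "v < n"
  have "{u \<in> {0..<n}. v \<noteq> u} = {0..<n} - {v}" by auto
  hence "graph_deg (K_V n) K_E v = n - 1" using v by (simp add: graph_deg_def K_V_def K_E_def)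
  thus ?thesis using card_eq_wd[of ws v] by (simp add: plus_walk_deg_def walk_length_def)
qed

lemma irreg_K: "irregularising (K_V n) K_E ws \<longleftrightarrow> inj_on (wd ws) {0..<n}"
proof -
  have "\<forall>v\<in>K_V n. plus_walk_deg (K_V n) K_E ws v = (n-1) + wd ws v"
    using pwd_K[of _ n ws] by (simp add: K_V_def)
  hence "irregularising (K_V n) K_E ws \<longleftrightarrow> (\<forall>u\<in>K_V n. \<forall>v\<in>K_V n. u \<noteq> v \<longrightarrow> wd ws u \<noteq> wd ws v)"
    unfolding irregularising_def K_E_def by auto
  thus ?thesis unfolding inj_on_def K_V_def by blast
qed


lemma lower:
  assumes n: "n \<ge> 4" and w: "is_walk (K_V n) K_E ws" and ir: "irregularising (K_V n) K_E ws"
  shows "n^2 + 10 \<le> 2 * walk_length ws + 5 * n"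
proof -
  define f where "f = wd ws"
  have ne: "ws \<noteq> []" and sw: "set ws \<subseteq> {0..<n}" and sc: "successively (\<noteq>) ws"
    using w by (auto simp: walk_K)
  have inj: "inj_on f {0..<n}" using ir by (simp add: irreg_K f_def)
  define A where "A = f ` {0..<n}"
  have cA: "card A = n" using inj by (simp add: A_def card_image)
  have sA: "\<Sum>A = 2 * walk_length ws"
    using inj wd_sum[of "{0..<n}" ws] sc sw by (simp add: A_def sum.reindex f_def walk_length_def)
  define Od where "Od = {x\<in>A. odd x}"
  define Ev where "Ev = {x\<in>A. even x}"
  have "Od \<subseteq> f ` {hd ws, last ws}"
  proof
    fix x assume "x \<in> Od"
    then obtain v where v: "x = f v" "odd (f v)" by (auto simp: Od_def A_def)
    have "v = hd ws \<or> v = last ws"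
    proof (rule ccontr)
      assume "\<not> ?thesis"
      with wd_parity[OF sc ne, of v] have "f v = 2 * count_list ws v" by (simp add: f_def)
      with v show False by simp
    qed
    with v show "x \<in> f ` {hd ws, last ws}" by auto
  qed
  hence "card Od \<le> card (f ` {hd ws, last ws})" by (intro card_mono) auto
  also have "\<dots> \<le> card {hd ws, last ws}" by (rule card_image_le) simp
  also have "\<dots> \<le> 2" by (simp add: card_insert_if)
  finally have cO: "card Od \<le> 2" .
  have finA: "finite A" by (simp add: A_def)
  have AU: "A = Ev \<union> Od" "Ev \<inter> Od = {}" by (auto simp: Ev_def Od_def)
  have fE: "finite Ev" "finite Od" using finA by (auto simp: Ev_def Od_def)
  have cs: "card Ev + card Od = n" using card_Un_disjoint[OF fE AU(2)] AU(1) cA by simp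
  have ss: "\<Sum>Ev + \<Sum>Od = 2 * walk_length ws" using sum.union_disjoint[OF fE AU(2), of "\<lambda>x. x"] AU(1) sA by simp
  have "\<forall>x\<in>Ev. even x" "\<forall>x\<in>Od. odd x" unfolding Ev_def Od_def by blast+
  hence ce: "card Ev * (card Ev - 1) \<le> \<Sum>Ev" "card Od * card Od \<le> \<Sum>Od"
    using even_sum_lb[OF fE(1)] odd_sum_lb[OF fE(2)] by blast+
  then show ?thesis using arith_lb[OF _ cs cO n, of "2 * walk_length ws"] ss by simp
qed

fun blk :: "nat \<Rightarrow> nat \<Rightarrow> nat list" where
  "blk n 0 = []"
| "blk n (Suc k) = rev [n-1-k..<n] @ blk n k"

definition cw :: "nat \<Rightarrow> nat list" where
  "cw n = [1,2] @ blk n (n-3) @ [2]"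

lemma count_upt: "count_list [a..<b] v = (if a \<le> v \<and> v < b then 1 else 0)"
  by (induction b) auto

lemma blk_set: "set (blk n k) \<subseteq> {n-k..<n}"
proof (induction k)
  case (Suc k)
  then show ?case by (auto dest!: subsetD)
qed simp

lemma blk_hd_last: "k \<ge> 1 \<Longrightarrow> k < n \<Longrightarrow> blk n k \<noteq> [] \<and> hd (blk n k) = n - 1 \<and> last (blk n k) = n - 1"
proof (induction k)
  case (Suc k)
  have ne: "[n-1-k..<n] \<noteq> []" using Suc by simp
  have h: "hd (rev [n-1-k..<n]) = n - 1" using Suc by (simp add: hd_rev)
  show ?case
  proof (cases "k = 0")
    case True then show ?thesis using Suc by (cases n) auto
  next
    case False
    then have "blk n k \<noteq> [] \<and> hd (blk n k) = n - 1 \<and> last (blk n k) = n - 1" using Suc by simp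
    then show ?thesis using ne h by simp
  qed
qed simp

lemma rev_upt_succ: "successively (\<noteq>) (rev [a..<b])"
proof (induction b)
  case (Suc b)
  show ?case
  proof (cases "a \<le> b")
    case True
    then have e: "rev [a..<Suc b] = b # rev [a..<b]" by simp
    have h: "rev [a..<b] = [] \<or> b \<noteq> hd (rev [a..<b])" by (auto simp: hd_rev)
    show ?thesis unfolding e successively_Cons using Suc h by blast
  qed simp
qed simp

lemma blk_succ: "k < n \<Longrightarrow> successively (\<noteq>) (blk n k)"
proof (induction k)
  case (Suc k)
  have s1: "successively (\<noteq>) (rev [n-1-k..<n])"
    by (rule rev_upt_succ)
  have ll: "last (rev [n-1-k..<n]) = n - 1 - k" using Suc by (simp add: last_rev)
  show ?case
  proof (cases "k = 0")
    case True then show ?thesis using s1 by simp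
  next
    case False
    then have "blk n k \<noteq> [] \<and> hd (blk n k) = n - 1" using blk_hd_last[of k n] Suc by simp
    then show ?thesis using Suc s1 ll False by (auto simp: successively_append_iff)
  qed
qed simp

lemma blk_count: "k < n \<Longrightarrow> v < n \<Longrightarrow> count_list (blk n k) v = k - (n - 1 - v)"
  by (induction k) (auto simp: count_upt)

definition g :: "nat \<Rightarrow> nat" where
  "g v = (if v = 0 then 0 else if v = 1 then 1 else if v = 2 then 3 else 2 * (v - 2))"

lemma cw_walk: "n \<ge> 4 \<Longrightarrow> is_walk (K_V n) K_E (cw n)"
proof -
  assume n: "n \<ge> 4"
  have hl: "blk n (n-3) \<noteq> [] \<and> hd (blk n (n-3)) = n - 1 \<and> last (blk n (n-3)) = n - 1"
    using blk_hd_last[of "n-3" n] n by simp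
  have "set (blk n (n-3)) \<subseteq> {0..<n}" using blk_set[of n "n-3"] by auto
  moreover have "successively (\<noteq>) (cw n)"
    using blk_succ[of "n-3" n] hl n by (simp add: cw_def successively_append_iff successively_Cons)
  ultimately show ?thesis using n by (simp add: walk_K cw_def)
qed

lemma cw_wd: "n \<ge> 4 \<Longrightarrow> v < n \<Longrightarrow> wd (cw n) v = g v"
proof -
  assume n: "n \<ge> 4" and v: "v < n"
  have sc: "successively (\<noteq>) (cw n)" and ne: "cw n \<noteq> []" using cw_walk[OF n] by (auto simp: walk_K)
  have hl: "blk n (n-3) \<noteq> []"
    using blk_hd_last[of "n-3" n] n by simp
  have "hd (cw n) = 1" "last (cw n) = 2" by (simp_all add: cw_def)
  moreover have "count_list (cw n) v = (if v = 1 then 1 else 0) + (if v = 2 then 2 else 0) + (n - 3 - (n - 1 - v))"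
    using blk_count[of "n-3" n v] n v by (auto simp: cw_def)
  ultimately show ?thesis using wd_parity[OF sc ne, of v] n v by (auto simp: g_def)
qed

lemma g_inj: "inj_on g {0..<n}"
  by (auto simp: inj_on_def g_def split: if_splits; presburger)

lemma g_sum: "n \<ge> 4 \<Longrightarrow> sum g {0..<n} + 5 * n = n^2 + 10"
proof (induction n rule: dec_induct[where i = 4, simplified])
  case base
  show ?case by (simp add: g_def numeral_eq_Suc)
next
  case (step m)
  then show ?case by (simp add: g_def power2_eq_square algebra_simps)
qed

lemma main_n:
  assumes n: "n \<ge> 4"
  shows "2 * min_irreg_walk_len (K_V n) K_E = n^2 + 10 - 5*n"
proof -
  have w: "is_walk (K_V n) K_E (cw n)" using cw_walk[OF n] .
  have sc: "successively (\<noteq>) (cw n)" and sw: "set (cw n) \<subseteq> {0..<n}" using w by (auto simp: walk_K)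
  have wdg: "\<And>v. v \<in> {0..<n} \<Longrightarrow> wd (cw n) v = g v" using cw_wd[OF n] by simp
  have ir: "irregularising (K_V n) K_E (cw n)"
  proof -
    have "inj_on (wd (cw n)) {0..<n} = inj_on g {0..<n}" by (rule inj_on_cong) (rule wdg)
    thus ?thesis unfolding irreg_K using g_inj by simp
  qed
  have "sum (wd (cw n)) {0..<n} = sum g {0..<n}" using wdg by (rule sum.cong[OF refl])
  moreover have "sum (wd (cw n)) {0..<n} = 2 * walk_length (cw n)"
    using wd_sum[of "{0..<n}" "cw n"] sc sw unfolding walk_length_def by simp
  ultimately have len: "2 * walk_length (cw n) + 5 * n = n^2 + 10"
    using g_sum[OF n] by linarith
  have "min_irreg_walk_len (K_V n) K_E = walk_length (cw n)"
    unfolding min_irreg_walk_len_def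
  proof (rule Least_equality)
    show "\<exists>ws. is_walk (K_V n) K_E ws \<and> irregularising (K_V n) K_E ws \<and> walk_length ws = walk_length (cw n)"
      using w ir by blast
  next
    fix p assume "\<exists>ws. is_walk (K_V n) K_E ws \<and> irregularising (K_V n) K_E ws \<and> walk_length ws = p"
    then obtain ws where "is_walk (K_V n) K_E ws" "irregularising (K_V n) K_E ws" "walk_length ws = p" by blast
    with lower[OF n] have "n^2 + 10 \<le> 2 * p + 5 * n" by blast
    with len show "walk_length (cw n) \<le> p" by linarith
  qed
  with len show ?thesis by simp
qed

lemma main_3: "min_irreg_walk_len (K_V 3) K_E = 3"
  unfolding min_irreg_walk_len_def
proof (rule Least_equality)
  let ?ws = "[0,1,0,2::nat]"
  have "is_walk (K_V 3) K_E ?ws" by (simp add: walk_K)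
  moreover have "inj_on (wd ?ws) {0..<3}"
  proof -
    have "{0..<3::nat} = {0,1,2}" by auto
    thus ?thesis by (simp add: inj_on_def)
  qed
  ultimately show "\<exists>ws. is_walk (K_V 3) K_E ws \<and> irregularising (K_V 3) K_E ws \<and> walk_length ws = 3"
    by (intro exI[of _ ?ws]) (simp add: irreg_K walk_length_def)
next
  fix p assume "\<exists>ws. is_walk (K_V 3) K_E ws \<and> irregularising (K_V 3) K_E ws \<and> walk_length ws = p"
  then obtain ws where w: "is_walk (K_V 3) K_E ws" and ir: "irregularising (K_V 3) K_E ws"
    and p: "walk_length ws = p" by blast
  have ne: "ws \<noteq> []" and sw: "set ws \<subseteq> {0..<3}" and sc: "successively (\<noteq>) ws"
    using w by (auto simp: walk_K)
  have inj: "\<And>u v. u < 3 \<Longrightarrow> v < 3 \<Longrightarrow> wd ws u = wd ws v \<Longrightarrow> u = v"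
    using ir by (auto simp: irreg_K inj_on_def)
  show "3 \<le> p"
  proof (rule ccontr)
    assume "\<not> 3 \<le> p"
    hence "length ws \<le> 3" using p by (simp add: walk_length_def)
    then consider a where "ws = [a]" | a b where "ws = [a,b]" | a b c where "ws = [a,b,c]"
      using ne by (cases ws; cases "tl ws"; cases "tl (tl ws)"; cases "tl (tl (tl ws))") auto
    then show False
    proof cases
      case 1 then show ?thesis using inj[of 0 1] by simp
    next
      case 2 then show ?thesis using inj[of a b] sw sc by auto
    next
      case 3
      show ?thesis
      proof (cases "a = c")
        case True then show ?thesis using inj[of a b] sw sc 3 by auto
      next
        case False then show ?thesis using inj[of a c] sw sc 3 by auto
      qed
    qed
  qed
qed

theorem theorem5p1:
  shows "min_irreg_walk_len (K_V 3) K_E = 3 \<and>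
    (\<forall>n::nat. n \<ge> 4 \<longrightarrow> 2 * min_irreg_walk_len (K_V n) K_E = n^2 + 10 - 5*n)"
  using main_3 main_n by blast

end
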